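(* Let $\Gamma$ be a connected $3$-plane drawing. Then \[ 4|E_\times| \;\ge\; 2N(B_4)+2N(B_5)+2N(U_5)+2N(U_6). \]
   Context: Drawings are on the sphere: vertices are distinct points, edges (of a graph possibly with parallel edges, no loops) are Jordan arcs; any two edges share finitely many points, each a common endpoint or a proper crossing; no three edges cross at one point; no edge crosses itself; adjacent edges do not cross. A drawing is $3$-plane if every edge is crossed at most three times. For $i\in\{0,1,2,3\}$, $E_i$ is the set of edges with exactly $i$ crossings, and $E_\times=E_1\cup E_2\cup E_3$. An edge with $i$ crossings is split into $i+1$ edge-segments; an edge-segment is inner if both its endpoints are crossings and outer otherwise. The planarization replaces each crossing by a degree-$4$ vertex; the drawing is connected if its planarization is connected. Cells are the components of the sphere minus all vertices and edges; the boundary of a cell is a cyclic sequence alternating between edge-segments and vertices/crossings. Cell types: $B_4$: boundary $v$, outer segment, crossing, inner segment, crossing, outer segment. $B_5$: boundary $v$, outer segment, crossing, inner segment, crossing, inner segment, crossing, outer segment. $U_5$: boundary $u$, uncrossed edge $uv$, $v$, outer segment, crossing, outer segment (two vertices $u,v$). $U_6$: boundary $u$, uncrossed edge $uv$, $v$, outer segment, crossing, inner segment, crossing, outer segment. $N(T)$ is the number of cells of type $T$. *)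

theory Defs
  imports "HOL-Analysis.Analysis"
begin

text \<open>Topological drawings on the unit sphere S2 in R^3.
  A drawing is given by a finite vertex set V (points of S2), a finite edge index set E
  (parallel edges allowed) and for each edge e an arc g e :: real => real^3 on [0,1]
  whose endpoints are its end vertices.\<close>

definition S2 :: "(real^3) set" where
  "S2 = sphere 0 1"

definition ends :: "(real \<Rightarrow> real^3) \<Rightarrow> (real^3) set" where
  "ends \<gamma> = {pathstart \<gamma>, pathfinish \<gamma>}"

text \<open>Proper crossing of two arcs A, B at p: locally near p the pair looks like the two
  coordinate axes in a disc.\<close>
definition proper_crossing :: "(real^3) set \<Rightarrow> (real^3) set \<Rightarrow> real^3 \<Rightarrow> bool" where
  "proper_crossing A B p \<longleftrightarrow>
     (\<exists>U h k. openin (top_of_set S2) U \<and> p \<in> U \<and>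
        homeomorphism U (ball (0::complex) 1) h k \<and> h p = 0 \<and>
        h ` (U \<inter> A) = {z \<in> ball 0 1. Im z = 0} \<and>
        h ` (U \<inter> B) = {z \<in> ball 0 1. Re z = 0})"

definition drawing :: "(real^3) set \<Rightarrow> 'e set \<Rightarrow> ('e \<Rightarrow> real \<Rightarrow> real^3) \<Rightarrow> bool" where
  "drawing V E g \<longleftrightarrow>
     finite V \<and> V \<subseteq> S2 \<and> finite E \<and>
     (\<forall>e\<in>E. arc (g e) \<and> path_image (g e) \<subseteq> S2 \<and>
              pathstart (g e) \<in> V \<and> pathfinish (g e) \<in> V \<and>
              path_image (g e) \<inter> V = ends (g e)) \<and>
     (\<forall>e\<in>E. \<forall>f\<in>E. e \<noteq> f \<longrightarrow>
         finite (path_image (g e) \<inter> path_image (g f)) \<and>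
         (\<forall>p \<in> path_image (g e) \<inter> path_image (g f).
             (p \<in> ends (g e) \<and> p \<in> ends (g f)) \<or>
             (p \<notin> V \<and> proper_crossing (path_image (g e)) (path_image (g f)) p))) \<and>
     (\<forall>e\<in>E. \<forall>f\<in>E. \<forall>h\<in>E. e \<noteq> f \<and> e \<noteq> h \<and> f \<noteq> h \<longrightarrow>
         path_image (g e) \<inter> path_image (g f) \<inter> path_image (g h) \<subseteq> V) \<and>
     (\<forall>e\<in>E. \<forall>f\<in>E. e \<noteq> f \<and> ends (g e) \<inter> ends (g f) \<noteq> {} \<longrightarrow>
         path_image (g e) \<inter> path_image (g f) \<subseteq> V)"

definition crossing_pts :: "(real^3) set \<Rightarrow> 'e set \<Rightarrow> ('e \<Rightarrow> real \<Rightarrow> real^3) \<Rightarrow> (real^3) set" where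
  "crossing_pts V E g =
     {p. p \<notin> V \<and> (\<exists>e\<in>E. \<exists>f\<in>E. e \<noteq> f \<and> p \<in> path_image (g e) \<and> p \<in> path_image (g f))}"

definition pnodes :: "(real^3) set \<Rightarrow> 'e set \<Rightarrow> ('e \<Rightarrow> real \<Rightarrow> real^3) \<Rightarrow> (real^3) set" where
  "pnodes V E g = V \<union> crossing_pts V E g"

definition num_cr :: "(real^3) set \<Rightarrow> 'e set \<Rightarrow> ('e \<Rightarrow> real \<Rightarrow> real^3) \<Rightarrow> 'e \<Rightarrow> nat" where
  "num_cr V E g e = card (path_image (g e) \<inter> crossing_pts V E g)"

definition edges_with_cr :: "(real^3) set \<Rightarrow> 'e set \<Rightarrow> ('e \<Rightarrow> real \<Rightarrow> real^3) \<Rightarrow> nat \<Rightarrow> 'e set" where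
  "edges_with_cr V E g i = {e \<in> E. num_cr V E g e = i}"

definition crossed_edges :: "(real^3) set \<Rightarrow> 'e set \<Rightarrow> ('e \<Rightarrow> real \<Rightarrow> real^3) \<Rightarrow> 'e set" where
  "crossed_edges V E g = edges_with_cr V E g 1 \<union> edges_with_cr V E g 2 \<union> edges_with_cr V E g 3"

definition three_plane :: "(real^3) set \<Rightarrow> 'e set \<Rightarrow> ('e \<Rightarrow> real \<Rightarrow> real^3) \<Rightarrow> bool" where
  "three_plane V E g \<longleftrightarrow> (\<forall>e\<in>E. num_cr V E g e \<le> 3)"

definition seg_of :: "(real^3) set \<Rightarrow> 'e set \<Rightarrow> ('e \<Rightarrow> real \<Rightarrow> real^3) \<Rightarrow> 'e \<Rightarrow> real \<Rightarrow> real \<Rightarrow> bool" where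
  "seg_of V E g e a b \<longleftrightarrow> e \<in> E \<and> 0 \<le> a \<and> a < b \<and> b \<le> 1 \<and>
      g e a \<in> pnodes V E g \<and> g e b \<in> pnodes V E g \<and>
      (\<forall>t. a < t \<and> t < b \<longrightarrow> g e t \<notin> pnodes V E g)"

definition seg_between :: "(real^3) set \<Rightarrow> 'e set \<Rightarrow> ('e \<Rightarrow> real \<Rightarrow> real^3) \<Rightarrow>
    (real^3) set \<Rightarrow> real^3 \<Rightarrow> real^3 \<Rightarrow> bool" where
  "seg_between V E g s x y \<longleftrightarrow>
     (\<exists>e a b. seg_of V E g e a b \<and> s = g e ` {a..b} \<and> {x, y} = {g e a, g e b})"

definition uncrossed_edge_between :: "(real^3) set \<Rightarrow> 'e set \<Rightarrow> ('e \<Rightarrow> real \<Rightarrow> real^3) \<Rightarrow>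
    (real^3) set \<Rightarrow> real^3 \<Rightarrow> real^3 \<Rightarrow> bool" where
  "uncrossed_edge_between V E g s u v \<longleftrightarrow>
     (\<exists>e\<in>E. num_cr V E g e = 0 \<and> s = path_image (g e) \<and> {u, v} = ends (g e))"

definition connected_drawing :: "(real^3) set \<Rightarrow> 'e set \<Rightarrow> ('e \<Rightarrow> real \<Rightarrow> real^3) \<Rightarrow> bool" where
  "connected_drawing V E g \<longleftrightarrow>
     (\<forall>x\<in>pnodes V E g. \<forall>y\<in>pnodes V E g.
        (x, y) \<in> {(a, b). \<exists>s. seg_between V E g s a b}\<^sup>*)"

definition drawing_set :: "(real^3) set \<Rightarrow> 'e set \<Rightarrow> ('e \<Rightarrow> real \<Rightarrow> real^3) \<Rightarrow> (real^3) set" where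
  "drawing_set V E g = V \<union> (\<Union>e\<in>E. path_image (g e))"

definition cells :: "(real^3) set \<Rightarrow> 'e set \<Rightarrow> ('e \<Rightarrow> real \<Rightarrow> real^3) \<Rightarrow> (real^3) set set" where
  "cells V E g = components (S2 - drawing_set V E g)"

text \<open>A cell whose boundary walk is a simple cycle of the planarization has exactly the point
  set of that cycle as its boundary, and conversely; the cell types below are all of this
  form.\<close>
definition cell_bd :: "(real^3) set \<Rightarrow> (real^3) set" where
  "cell_bd F = closure F - F"

definition is_B4 :: "(real^3) set \<Rightarrow> 'e set \<Rightarrow> ('e \<Rightarrow> real \<Rightarrow> real^3) \<Rightarrow> (real^3) set \<Rightarrow> bool" where
  "is_B4 V E g F \<longleftrightarrow>
     (\<exists>v c1 c2 s1 s2 s3. v \<in> V \<and> c1 \<in> crossing_pts V E g \<and> c2 \<in> crossing_pts V E g \<and>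
        c1 \<noteq> c2 \<and>
        seg_between V E g s1 v c1 \<and> seg_between V E g s2 c1 c2 \<and> seg_between V E g s3 c2 v \<and>
        cell_bd F = s1 \<union> s2 \<union> s3)"

definition is_B5 :: "(real^3) set \<Rightarrow> 'e set \<Rightarrow> ('e \<Rightarrow> real \<Rightarrow> real^3) \<Rightarrow> (real^3) set \<Rightarrow> bool" where
  "is_B5 V E g F \<longleftrightarrow>
     (\<exists>v c1 c2 c3 s1 s2 s3 s4. v \<in> V \<and> c1 \<in> crossing_pts V E g \<and>
        c2 \<in> crossing_pts V E g \<and> c3 \<in> crossing_pts V E g \<and>
        c1 \<noteq> c2 \<and> c1 \<noteq> c3 \<and> c2 \<noteq> c3 \<and>
        seg_between V E g s1 v c1 \<and> seg_between V E g s2 c1 c2 \<and>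
        seg_between V E g s3 c2 c3 \<and> seg_between V E g s4 c3 v \<and>
        cell_bd F = s1 \<union> s2 \<union> s3 \<union> s4)"

definition is_U5 :: "(real^3) set \<Rightarrow> 'e set \<Rightarrow> ('e \<Rightarrow> real \<Rightarrow> real^3) \<Rightarrow> (real^3) set \<Rightarrow> bool" where
  "is_U5 V E g F \<longleftrightarrow>
     (\<exists>u v c s0 s1 s2. u \<in> V \<and> v \<in> V \<and> u \<noteq> v \<and> c \<in> crossing_pts V E g \<and>
        uncrossed_edge_between V E g s0 u v \<and>
        seg_between V E g s1 v c \<and> seg_between V E g s2 c u \<and>
        cell_bd F = s0 \<union> s1 \<union> s2)"

definition is_U6 :: "(real^3) set \<Rightarrow> 'e set \<Rightarrow> ('e \<Rightarrow> real \<Rightarrow> real^3) \<Rightarrow> (real^3) set \<Rightarrow> bool" where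
  "is_U6 V E g F \<longleftrightarrow>
     (\<exists>u v c1 c2 s0 s1 s2 s3. u \<in> V \<and> v \<in> V \<and> u \<noteq> v \<and>
        c1 \<in> crossing_pts V E g \<and> c2 \<in> crossing_pts V E g \<and> c1 \<noteq> c2 \<and>
        uncrossed_edge_between V E g s0 u v \<and>
        seg_between V E g s1 v c1 \<and> seg_between V E g s2 c1 c2 \<and> seg_between V E g s3 c2 u \<and>
        cell_bd F = s0 \<union> s1 \<union> s2 \<union> s3)"

definition num_cells :: "(real^3) set \<Rightarrow> 'e set \<Rightarrow> ('e \<Rightarrow> real \<Rightarrow> real^3) \<Rightarrow>
    ((real^3) set \<Rightarrow> 'e set \<Rightarrow> ('e \<Rightarrow> real \<Rightarrow> real^3) \<Rightarrow> (real^3) set \<Rightarrow> bool) \<Rightarrow> nat" where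
  "num_cells V E g T = card {F \<in> cells V E g. T V E g F}"

end

theory Submission
  imports Defs
begin


context
  fixes V :: "(real^3) set" and E :: "'e set" and g :: "'e \<Rightarrow> real \<Rightarrow> real^3"
  assumes dr: "drawing V E g"
begin

lemma dr_E: "\<forall>e\<in>E. arc (g e) \<and> path_image (g e) \<subseteq> S2 \<and>
              pathstart (g e) \<in> V \<and> pathfinish (g e) \<in> V \<and>
              path_image (g e) \<inter> V = ends (g e)"
  using dr unfolding drawing_def by (elim conjE) assumption

lemma dr_edge: "e \<in> E \<Longrightarrow> arc (g e) \<and> path_image (g e) \<subseteq> S2 \<and>
              pathstart (g e) \<in> V \<and> pathfinish (g e) \<in> V \<and>
              path_image (g e) \<inter> V = ends (g e)"
  using dr_E by (rule bspec)

lemma dr_inj: "e \<in> E \<Longrightarrow> inj_on (g e) {0..1}"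
  using dr_edge arc_def by blast

lemma dr_cont: "e \<in> E \<Longrightarrow> continuous_on {0..1} (g e)"
  using dr_edge arc_def path_def by blast

lemma dr_V_param: assumes "e \<in> E" "t \<in> {0..1}" "g e t \<in> V" shows "t = 0 \<or> t = 1"
proof -
  have "g e t \<in> path_image (g e) \<inter> V" using assms by (auto simp: path_image_def)
  then have "g e t \<in> ends (g e)" using dr_edge[OF assms(1)] by blast
  then have "g e t = g e 0 \<or> g e t = g e 1" by (auto simp: ends_def pathstart_def pathfinish_def)
  then show ?thesis using dr_inj[OF assms(1)] assms(2) by (auto simp: inj_on_def)
qed

lemma dr_pair: "\<forall>e\<in>E. \<forall>f\<in>E. e \<noteq> f \<longrightarrow>
         finite (path_image (g e) \<inter> path_image (g f)) \<and>
         (\<forall>p \<in> path_image (g e) \<inter> path_image (g f).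
             (p \<in> ends (g e) \<and> p \<in> ends (g f)) \<or>
             (p \<notin> V \<and> proper_crossing (path_image (g e)) (path_image (g f)) p))"
  using dr unfolding drawing_def by (elim conjE) assumption

lemma dr_finite_inter: "e \<in> E \<Longrightarrow> f \<in> E \<Longrightarrow> e \<noteq> f \<Longrightarrow> finite (path_image (g e) \<inter> path_image (g f))"
  using dr_pair by blast

lemma finite_E: "finite E" using dr unfolding drawing_def by (elim conjE) assumption
lemma finite_V: "finite V" using dr unfolding drawing_def by (elim conjE) assumption

lemma finite_cr_on: assumes "e \<in> E" shows "finite (path_image (g e) \<inter> crossing_pts V E g)"
proof -
  have "path_image (g e) \<inter> crossing_pts V E g \<subseteq> (\<Union>f\<in>E-{e}. path_image (g e) \<inter> path_image (g f))"
    unfolding crossing_pts_def by blast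
  moreover have "finite (\<Union>f\<in>E-{e}. path_image (g e) \<inter> path_image (g f))"
    by (intro finite_UN_I) (use finite_E dr_finite_inter assms in auto)
  ultimately show ?thesis by (rule finite_subset)
qed

lemma crossing_edges:
  assumes "c \<in> crossing_pts V E g"
  obtains e1 f1 where "e1 \<in> E" "f1 \<in> E" "e1 \<noteq> f1" "c \<in> path_image (g e1)" "c \<in> path_image (g f1)"
    "c \<notin> V" "proper_crossing (path_image (g e1)) (path_image (g f1)) c"
    "\<And>e. e \<in> E \<Longrightarrow> c \<in> path_image (g e) \<Longrightarrow> e = e1 \<or> e = f1"
proof -
  obtain e1 f1 where ef: "e1 \<in> E" "f1 \<in> E" "e1 \<noteq> f1" "c \<in> path_image (g e1)" "c \<in> path_image (g f1)" "c \<notin> V"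
    using assms unfolding crossing_pts_def by blast
  have "ends (g e1) \<subseteq> V" using dr_edge[OF ef(1)] by (simp add: ends_def)
  note D4 = dr_pair
  have "ends (g e1) \<subseteq> V" using dr_edge[OF ef(1)] by (simp add: ends_def)
  then have pc: "proper_crossing (path_image (g e1)) (path_image (g f1)) c"
    using D4 ef by blast
  have "e = e1 \<or> e = f1" if "e \<in> E" "c \<in> path_image (g e)" for e
  proof (rule ccontr)
    assume "\<not> (e = e1 \<or> e = f1)"
    have D5: "\<forall>e\<in>E. \<forall>f\<in>E. \<forall>h\<in>E. e \<noteq> f \<and> e \<noteq> h \<and> f \<noteq> h \<longrightarrow>
         path_image (g e) \<inter> path_image (g f) \<inter> path_image (g h) \<subseteq> V"
      using dr unfolding drawing_def by (elim conjE) assumption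
    then have "path_image (g e) \<inter> path_image (g e1) \<inter> path_image (g f1) \<subseteq> V"
      using ef that \<open>\<not> (e = e1 \<or> e = f1)\<close> by metis
    then show False using ef that by blast
  qed
  then show ?thesis using that ef pc by blast
qed

end


definition quad :: "(complex \<Rightarrow> real^3) \<Rightarrow> real \<Rightarrow> bool \<Rightarrow> bool \<Rightarrow> (real^3) set" where
  "quad k r b1 b2 = k ` {z. cmod z < r \<and> (if b1 then 0 < Re z else Re z < 0) \<and> (if b2 then 0 < Im z else Im z < 0)}"

definition qset :: "(complex \<Rightarrow> real^3) \<Rightarrow> real \<Rightarrow> complex \<Rightarrow> (real^3) set set" where
  "qset k r w = (if Im w = 0 then {quad k r (0 < Re w) True, quad k r (0 < Re w) False}
                 else {quad k r True (0 < Im w), quad k r False (0 < Im w)})"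

definition loc :: "(real^3) set \<Rightarrow> 'e set \<Rightarrow> ('e \<Rightarrow> real \<Rightarrow> real^3) \<Rightarrow> real^3 \<Rightarrow> 'e \<Rightarrow> 'e \<Rightarrow>
   (real^3) set \<Rightarrow> (real^3 \<Rightarrow> complex) \<Rightarrow> (complex \<Rightarrow> real^3) \<Rightarrow> real \<Rightarrow> bool" where
  "loc V E g c e1 f1 U h k r \<longleftrightarrow> e1 \<in> E \<and> f1 \<in> E \<and> e1 \<noteq> f1 \<and>
     c \<in> path_image (g e1) \<and> c \<in> path_image (g f1) \<and> c \<notin> V \<and>
     (\<forall>e\<in>E. c \<in> path_image (g e) \<longrightarrow> e = e1 \<or> e = f1) \<and>
     openin (top_of_set S2) U \<and> c \<in> U \<and> homeomorphism U (ball 0 1) h k \<and> h c = 0 \<and>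
     h ` (U \<inter> path_image (g e1)) = {z \<in> ball 0 1. Im z = 0} \<and>
     h ` (U \<inter> path_image (g f1)) = {z \<in> ball 0 1. Re z = 0} \<and>
     0 < r \<and> r \<le> 1 \<and>
     (\<forall>z \<in> ball 0 r. k z \<in> drawing_set V E g \<longrightarrow> k z \<in> path_image (g e1) \<union> path_image (g f1))"

context
  fixes V :: "(real^3) set" and E :: "'e set" and g :: "'e \<Rightarrow> real \<Rightarrow> real^3"
  assumes dr: "drawing V E g"
begin

lemma crossing_local:
  assumes "c \<in> crossing_pts V E g"
  shows "\<exists>e1 f1 U h k r. loc V E g c e1 f1 U h k r"
proof -
  obtain e1 f1 where ef: "e1 \<in> E" "f1 \<in> E" "e1 \<noteq> f1" "c \<in> path_image (g e1)" "c \<in> path_image (g f1)"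
    "c \<notin> V" "proper_crossing (path_image (g e1)) (path_image (g f1)) c"
    "\<And>e. e \<in> E \<Longrightarrow> c \<in> path_image (g e) \<Longrightarrow> e = e1 \<or> e = f1"
    by (rule crossing_edges[OF dr assms]) blast
  obtain U h k where U: "openin (top_of_set S2) U" "c \<in> U" "homeomorphism U (ball (0::complex) 1) h k"
     "h c = 0" "h ` (U \<inter> path_image (g e1)) = {z \<in> ball 0 1. Im z = 0}"
     "h ` (U \<inter> path_image (g f1)) = {z \<in> ball 0 1. Re z = 0}"
    using ef(7) unfolding proper_crossing_def by blast
  have hk: "\<forall>x\<in>U. k (h x) = x" "continuous_on (ball 0 1) k"
    using U(3) unfolding homeomorphism_def by auto
  have k0: "k 0 = c" using hk(1) U(2) U(4) by force
  define D' where "D' = V \<union> (\<Union>e\<in>E-{e1,f1}. path_image (g e))"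
  have "closed D'" unfolding D'_def
  proof (intro closed_Un closed_UN)
    show "closed V" using finite_V[OF dr] by (rule finite_imp_closed)
    show "finite (E - {e1, f1})" using finite_E[OF dr] by simp
    show "\<forall>e\<in>E - {e1,f1}. closed (path_image (g e))"
      using dr_edge[OF dr] arc_imp_path closed_path_image by blast
  qed
  moreover have "c \<notin> D'" unfolding D'_def using ef by auto
  ultimately obtain \<delta> where d: "\<delta> > 0" "ball c \<delta> \<subseteq> - D'"
  proof -
    have "open (- D')" using \<open>closed D'\<close> by (simp add: open_Compl)
    moreover have "c \<in> - D'" using \<open>c \<notin> D'\<close> by simp
    ultimately show ?thesis using open_contains_ball that by blast
  qed
  obtain d where dd: "d > 0" "\<forall>x'\<in>ball 0 1. dist x' 0 < d \<longrightarrow> dist (k x') (k 0) < \<delta>"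
  proof -
    have "(0::complex) \<in> ball 0 1" by simp
    then show ?thesis using hk(2) d(1) that unfolding continuous_on_iff by blast
  qed
  define r where "r = min d 1"
  have r: "0 < r" "r \<le> 1" using dd by (auto simp: r_def)
  have kz: "k z \<in> path_image (g e1) \<union> path_image (g f1)"
    if "z \<in> ball 0 r" "k z \<in> drawing_set V E g" for z
  proof -
    have "z \<in> ball 0 1" "dist z 0 < d" using that by (auto simp: r_def dist_commute)
    then have "dist (k z) c < \<delta>" using dd k0 by auto
    then have "k z \<notin> D'" using d by (auto simp: dist_commute)
    then show ?thesis using that(2) ef(8) unfolding D'_def drawing_set_def by auto
  qed
  have "loc V E g c e1 f1 U h k r"
    unfolding loc_def using ef U r kz by (intro conjI ballI impI) auto
  then show ?thesis by blast
qed

end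

lemma loc_E: assumes "loc V E g c e1 f1 U h k r"
  shows "e1 \<in> E" "f1 \<in> E" "e1 \<noteq> f1" "c \<in> path_image (g e1)" "c \<in> path_image (g f1)" "c \<notin> V"
  using assms by (simp_all add: loc_def)

lemma loc_only: assumes "loc V E g c e1 f1 U h k r" "e \<in> E" "c \<in> path_image (g e)"
  shows "e = e1 \<or> e = f1"
  using assms unfolding loc_def by blast

lemma loc_U0: assumes "loc V E g c e1 f1 U h k r" shows "openin (top_of_set S2) U"
  using assms unfolding loc_def by (elim conjE) assumption

lemma loc_U1: assumes "loc V E g c e1 f1 U h k r" shows "c \<in> U"
  using assms unfolding loc_def by (elim conjE) assumption

lemma loc_U2: assumes "loc V E g c e1 f1 U h k r" shows "homeomorphism U (ball 0 1) h k"
  using assms unfolding loc_def by (elim conjE) assumption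

lemma loc_U3: assumes "loc V E g c e1 f1 U h k r" shows "h c = 0"
  using assms unfolding loc_def by (elim conjE) assumption

lemma loc_U4: assumes "loc V E g c e1 f1 U h k r" shows "h ` (U \<inter> path_image (g e1)) = {z \<in> ball 0 1. Im z = 0}"
  using assms unfolding loc_def by (elim conjE) assumption

lemma loc_U5: assumes "loc V E g c e1 f1 U h k r" shows "h ` (U \<inter> path_image (g f1)) = {z \<in> ball 0 1. Re z = 0}"
  using assms unfolding loc_def by (elim conjE) assumption

lemma loc_U6: assumes "loc V E g c e1 f1 U h k r" shows "0 < r"
  using assms unfolding loc_def by (elim conjE) assumption

lemma loc_U7: assumes "loc V E g c e1 f1 U h k r" shows "r \<le> 1"
  using assms unfolding loc_def by (elim conjE) assumption

lemmas loc_U = loc_U0 loc_U1 loc_U2 loc_U3 loc_U4 loc_U5 loc_U6 loc_U7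

lemma loc_kz:
  assumes "loc V E g c e1 f1 U h k r" "z \<in> ball 0 r" "k z \<in> drawing_set V E g"
  shows "k z \<in> path_image (g e1) \<union> path_image (g f1)"
  using assms unfolding loc_def by blast

lemma loc_hom:
  assumes "loc V E g c e1 f1 U h k r"
  shows "\<forall>x\<in>U. k (h x) = x" "h ` U = ball 0 1" "continuous_on U h" "\<forall>y\<in>ball 0 1. h (k y) = y"
    "k ` ball 0 1 = U" "continuous_on (ball 0 1) k"
  using loc_U(3)[OF assms] by (simp_all add: homeomorphism_def)

lemma loc_US2: assumes "loc V E g c e1 f1 U h k r" shows "U \<subseteq> S2"
  using openin_subset[OF loc_U(1)[OF assms]] by simp

lemma loc_k0: assumes "loc V E g c e1 f1 U h k r" shows "k 0 = c"
proof -
  have "k (h c) = c" using loc_hom(1)[OF assms] loc_U(2)[OF assms] by blast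
  then show ?thesis using loc_U(4)[OF assms] by simp
qed

lemma loc_axis1:
  assumes "loc V E g c e1 f1 U h k r" "z \<in> ball 0 1" "Im z = 0"
  shows "k z \<in> path_image (g e1)"
proof -
  have "z \<in> h ` (U \<inter> path_image (g e1))" using assms loc_U[OF assms(1)] by auto
  then obtain y where "y \<in> U" "y \<in> path_image (g e1)" "z = h y" by auto
  then show ?thesis using loc_hom(1)[OF assms(1)] by auto
qed

lemma loc_axis2:
  assumes "loc V E g c e1 f1 U h k r" "z \<in> ball 0 1" "Re z = 0"
  shows "k z \<in> path_image (g f1)"
proof -
  have "z \<in> h ` (U \<inter> path_image (g f1))" using assms loc_U[OF assms(1)] by auto
  then obtain y where "y \<in> U" "y \<in> path_image (g f1)" "z = h y" by auto
  then show ?thesis using loc_hom(1)[OF assms(1)] by auto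
qed

lemma loc_open:
  assumes "loc V E g c e1 f1 U h k r" "open W" "W \<subseteq> ball 0 1"
  shows "openin (top_of_set S2) (k ` W)"
proof -
  have hom: "homeomorphism (ball 0 1) U k h" using loc_U(3)[OF assms(1)]
    using homeomorphism_sym by blast
  have "openin (top_of_set (ball 0 1)) W" using assms(2,3)
    by (simp add: openin_open_eq)
  then have "openin (top_of_set U) (k ` W)" using homeomorphism_imp_open_map[OF hom] by blast
  moreover have "openin (top_of_set S2) U" using loc_U(1)[OF assms(1)] .
  ultimately show ?thesis by (rule openin_trans)
qed

lemma quad_props:
  assumes "loc V E g c e1 f1 U h k r"
  shows "quad k r b1 b2 \<subseteq> S2 - drawing_set V E g" "connected (quad k r b1 b2)" "quad k r b1 b2 \<noteq> {}"
proof -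
  define Z where "Z = {z. cmod z < r \<and> (if b1 then 0 < Re z else Re z < 0) \<and> (if b2 then 0 < Im z else Im z < 0)}"
  have r: "0 < r" "r \<le> 1" using loc_U[OF assms] by auto
  have Zb: "Z \<subseteq> ball 0 r" "ball 0 r \<subseteq> ball (0::complex) 1" using r by (auto simp: Z_def)
  have "convex Z"
  proof -
    have "Z = ball 0 r \<inter> (if b1 then {z. Re z > 0} else {z. Re z < 0}) \<inter> (if b2 then {z. Im z > 0} else {z. Im z < 0})"
      by (auto simp: Z_def)
    then show ?thesis
      by (simp add: convex_Int convex_halfspace_Re_gt convex_halfspace_Re_lt convex_halfspace_Im_gt convex_halfspace_Im_lt)
  qed
  then have "connected Z" by (rule convex_connected)
  moreover have "continuous_on Z k" using loc_hom(6)[OF assms] Zb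
    by (meson continuous_on_subset order_trans)
  ultimately show "connected (quad k r b1 b2)"
    unfolding quad_def Z_def[symmetric] by (simp add: connected_continuous_image)
  define z0 where "z0 = Complex (if b1 then r/4 else -r/4) (if b2 then r/4 else -r/4)"
  have "cmod z0 \<le> \<bar>Re z0\<bar> + \<bar>Im z0\<bar>" by (rule cmod_le)
  also have "\<dots> < r" using r by (simp add: z0_def)
  finally have "z0 \<in> Z" using r by (auto simp: Z_def z0_def)
  then show "quad k r b1 b2 \<noteq> {}" unfolding quad_def Z_def[symmetric] by blast
  show "quad k r b1 b2 \<subseteq> S2 - drawing_set V E g"
  proof
    fix x assume "x \<in> quad k r b1 b2"
    then obtain z where z: "z \<in> Z" "x = k z" unfolding quad_def Z_def[symmetric] by blast
    have zb: "z \<in> ball 0 r" "z \<in> ball 0 1" using z Zb by auto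
    have "x \<in> U" using z zb loc_hom(5)[OF assms] by blast
    then have "x \<in> S2" using loc_US2[OF assms] by blast
    moreover have "x \<notin> drawing_set V E g"
    proof
      assume "x \<in> drawing_set V E g"
      then have "x \<in> path_image (g e1) \<union> path_image (g f1)" using loc_kz[OF assms zb(1)] z by blast
      moreover have "Im z \<noteq> 0" "Re z \<noteq> 0" using z(1) by (auto simp: Z_def split: if_splits)
      moreover have "x \<in> U" by fact
      ultimately have "h x \<in> h ` (U \<inter> path_image (g e1)) \<or> h x \<in> h ` (U \<inter> path_image (g f1))" by blast
      moreover have "h x = z" using z zb loc_hom(4)[OF assms] by auto
      ultimately show False using loc_U(5,6)[OF assms] \<open>Im z \<noteq> 0\<close> \<open>Re z \<noteq> 0\<close> by auto
    qed
    ultimately show "x \<in> S2 - drawing_set V E g" by blast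
  qed
qed



lemma cells_sub: "F \<in> cells V E g \<Longrightarrow> F \<subseteq> S2 - drawing_set V E g"
  unfolding cells_def by (rule in_components_subset)

lemma loc_near:
  assumes L: "loc V E g c e1 f1 U h k r" and p: "p \<in> k ` ball 0 r"
    "p \<in> path_image (g e1) \<union> path_image (g f1)" "p \<noteq> c"
    and F: "F \<in> cells V E g" "p \<in> closure F"
  shows "\<exists>q\<in>qset k r (h p). q \<subseteq> F"
proof -
  obtain w where w: "w \<in> ball 0 r" "p = k w" using p(1) by blast
  have r: "0 < r" "r \<le> 1" using loc_U[OF L] by auto
  have wb: "w \<in> ball 0 1" using w r by auto
  have hp: "h p = w" using loc_hom(4)[OF L] wb w by auto
  have pU: "p \<in> U" using loc_hom(5)[OF L] wb w by blast
  have "w \<noteq> 0" using w p(3) loc_k0[OF L] by auto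
  have axis: "Im w = 0 \<or> Re w = 0"
  proof -
    have "h p \<in> h ` (U \<inter> path_image (g e1)) \<or> h p \<in> h ` (U \<inter> path_image (g f1))"
      using pU p(2) by blast
    then show ?thesis using loc_U(5,6)[OF L] hp by auto
  qed
  define \<rho> where "\<rho> = min (cmod w) (r - cmod w)"
  have nw: "0 < cmod w" "cmod w < r" using \<open>w \<noteq> 0\<close> w(1) by auto
  then have rho: "0 < \<rho>" "\<rho> \<le> cmod w" "\<rho> \<le> r - cmod w" by (auto simp: \<rho>_def)
  have sub: "ball w \<rho> \<subseteq> ball 0 r"
  proof
    fix z assume "z \<in> ball w \<rho>"
    then have "cmod (z - w) < \<rho>" by (simp add: dist_norm norm_minus_commute)
    moreover have "cmod z \<le> cmod w + cmod (z - w)" using norm_triangle_ineq[of w "z - w"] by simp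
    ultimately show "z \<in> ball 0 r" using rho by simp
  qed
  have "ball (0::complex) r \<subseteq> ball 0 1" using r by auto
  then have "ball w \<rho> \<subseteq> ball 0 1" using sub by blast
  then have "openin (top_of_set S2) (k ` ball w \<rho>)"
    using loc_open[OF L open_ball] by blast
  then obtain Op where Op: "open Op" "k ` ball w \<rho> = S2 \<inter> Op" by (auto simp: openin_open)
  have "p \<in> Op" using Op(2) w(2) rho(1) by auto
  then have "Op \<inter> F \<noteq> {}" using open_Int_closure_eq_empty[OF Op(1), of F] F(2) by blast
  then obtain x where x: "x \<in> Op" "x \<in> F" by blast
  have FS: "F \<subseteq> S2 - drawing_set V E g" using cells_sub[OF F(1)] .
  then have "x \<in> k ` ball w \<rho>" using x Op(2) by blast
  then obtain z where z: "z \<in> ball w \<rho>" "x = k z" by blast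
  have zb: "z \<in> ball 0 r" "z \<in> ball 0 1" using z sub r by auto
  have xnd: "x \<notin> drawing_set V E g" using FS x by blast
  have e1f1: "path_image (g e1) \<subseteq> drawing_set V E g" "path_image (g f1) \<subseteq> drawing_set V E g"
    using loc_E(1,2)[OF L] unfolding drawing_set_def by auto
  have "Im z \<noteq> 0" using loc_axis1[OF L zb(2)] e1f1 xnd z(2) by blast
  have "Re z \<noteq> 0" using loc_axis2[OF L zb(2)] e1f1 xnd z(2) by blast
  have dzw: "cmod (z - w) < \<rho>" using z(1) by (simp add: dist_norm norm_minus_commute)
  have czr: "cmod z < r" using zb(1) by simp
  obtain q where q: "q \<in> qset k r (h p)" "x \<in> q"
  proof (cases "Im w = 0")
    case True
    have "\<bar>Re (z - w)\<bar> \<le> cmod (z - w)" by (rule abs_Re_le_cmod)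
    then have "\<bar>Re z - Re w\<bar> < \<bar>Re w\<bar>" using dzw rho cmod_eq_Re[OF True] by simp
    then have s: "(0 < Re w) = (0 < Re z)" "\<not> 0 < Re w \<Longrightarrow> Re z < 0" by linarith+
    have "x \<in> quad k r (0 < Re w) (0 < Im z)"
      unfolding quad_def using z(2) czr s \<open>Im z \<noteq> 0\<close> by (auto intro!: imageI)
    moreover have "quad k r (0 < Re w) (0 < Im z) \<in> qset k r (h p)"
      unfolding qset_def hp using True by (cases "0 < Im z") auto
    ultimately show ?thesis using that by blast
  next
    case False
    then have Rw: "Re w = 0" using axis by blast
    have "\<bar>Im (z - w)\<bar> \<le> cmod (z - w)" by (rule abs_Im_le_cmod)
    then have "\<bar>Im z - Im w\<bar> < \<bar>Im w\<bar>" using dzw rho cmod_eq_Im[OF Rw] by simp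
    then have s: "(0 < Im w) = (0 < Im z)" "\<not> 0 < Im w \<Longrightarrow> Im z < 0" by linarith+
    have "x \<in> quad k r (0 < Re z) (0 < Im w)"
      unfolding quad_def using z(2) czr s \<open>Re z \<noteq> 0\<close> by (auto intro!: imageI)
    moreover have "quad k r (0 < Re z) (0 < Im w) \<in> qset k r (h p)"
      unfolding qset_def hp using False by (cases "0 < Re z") auto
    ultimately show ?thesis using that by blast
  qed
  have "q \<subseteq> F"
  proof -
    obtain b1 b2 where "q = quad k r b1 b2" using q(1) unfolding qset_def by (auto split: if_splits)
    then have "connected q" "q \<subseteq> S2 - drawing_set V E g" using quad_props[OF L] by auto
    then show ?thesis using components_maximal[of F "S2 - drawing_set V E g" q] F(1) q(2) x(2)
      unfolding cells_def by blast
  qed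
  then show ?thesis using q(1) by blast
qed

lemma loc_card:
  assumes L: "loc V E g c e1 f1 U h k r" and p: "p \<in> k ` ball 0 r"
    "p \<in> path_image (g e1) \<union> path_image (g f1)" "p \<noteq> c"
  shows "finite {F \<in> cells V E g. p \<in> closure F} \<and> card {F \<in> cells V E g. p \<in> closure F} \<le> 2"
proof -
  define C where "C = {F \<in> cells V E g. p \<in> closure F}"
  define Q where "Q = qset k r (h p)"
  define \<phi> where "\<phi> F = (SOME q. q \<in> Q \<and> q \<subseteq> F)" for F
  have ph: "\<phi> F \<in> Q \<and> \<phi> F \<subseteq> F" if "F \<in> C" for F
  proof -
    have "\<exists>q. q \<in> Q \<and> q \<subseteq> F" using loc_near[OF L p] that unfolding C_def Q_def by blast
    then show ?thesis unfolding \<phi>_def by (rule someI_ex)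
  qed
  have Qne: "q \<noteq> {}" if "q \<in> Q" for q
    using that quad_props(3)[OF L] unfolding Q_def qset_def by (auto split: if_splits)
  have inj: "inj_on \<phi> C"
  proof (rule inj_onI)
    fix F G assume FG: "F \<in> C" "G \<in> C" "\<phi> F = \<phi> G"
    then have "F \<inter> G \<noteq> {}" using ph[OF FG(1)] ph[OF FG(2)] Qne by blast
    then show "F = G" using components_nonoverlap FG(1,2) unfolding C_def cells_def by blast
  qed
  have img: "\<phi> ` C \<subseteq> Q" using ph by blast
  have fQ: "finite Q" "card Q \<le> 2" unfolding Q_def qset_def by (auto simp: card_insert_if)
  have "finite C" using inj_on_finite[OF inj img fQ(1)] .
  moreover have "card C \<le> card Q" using card_inj_on_le[OF inj img fQ(1)] .
  ultimately show ?thesis using fQ(2) unfolding C_def by simp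
qed

context
  fixes V :: "(real^3) set" and E :: "'e set" and g :: "'e \<Rightarrow> real \<Rightarrow> real^3"
  assumes dr: "drawing V E g"
begin

lemma seg_card:
  assumes sb: "seg_between V E g s x c" and c: "c \<in> crossing_pts V E g"
  shows "finite {F \<in> cells V E g. s \<subseteq> closure F} \<and> card {F \<in> cells V E g. s \<subseteq> closure F} \<le> 2"
proof -
  obtain e a b where so: "seg_of V E g e a b" "s = g e ` {a..b}" "{x, c} = {g e a, g e b}"
    using sb unfolding seg_between_def by blast
  have ab: "e \<in> E" "0 \<le> a" "a < b" "b \<le> 1" using so(1) unfolding seg_of_def by auto
  have "c \<in> {x, c}" by simp
  then have "c \<in> {g e a, g e b}" by (simp only: so(3))
  then have "c = g e a \<or> c = g e b" by simp
  then obtain t0 where t0: "t0 = a \<or> t0 = b" "g e t0 = c" by metis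
  have t01: "t0 \<in> {0..1}" using t0 ab by auto
  obtain e1 f1 U h k r where L: "loc V E g c e1 f1 U h k r" using crossing_local[OF dr c] by blast
  have "c \<in> path_image (g e)" using t0 t01 unfolding path_image_def by blast
  then have ee: "e = e1 \<or> e = f1" using loc_only[OF L ab(1)] by blast
  have r: "0 < r" "r \<le> 1" using loc_U[OF L] by auto
  have "ball (0::complex) r \<subseteq> ball 0 1" using r by auto
  then have "openin (top_of_set S2) (k ` ball 0 r)" using loc_open[OF L open_ball] by blast
  then obtain Op where Op: "open Op" "k ` ball 0 r = S2 \<inter> Op" by (auto simp: openin_open)
  have "k 0 \<in> k ` ball 0 r" using r by simp
  then have "c \<in> Op" using Op(2) loc_k0[OF L] by auto
  then obtain \<epsilon> where eps: "\<epsilon> > 0" "ball c \<epsilon> \<subseteq> Op" using Op(1) open_contains_ball by blast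
  obtain d where d: "d > 0" "\<forall>t\<in>{0..1}. dist t t0 < d \<longrightarrow> dist (g e t) (g e t0) < \<epsilon>"
    using dr_cont[OF dr ab(1)] t01 eps(1) unfolding continuous_on_iff by blast
  obtain t where t: "t \<in> {a..b}" "t \<noteq> t0" "dist t t0 < d"
  proof (cases "t0 = b")
    case True
    have "max a (b - d/2) \<in> {a..b}" "max a (b - d/2) \<noteq> t0" "dist (max a (b - d/2)) t0 < d"
      using True ab d(1) by (auto simp: dist_real_def)
    then show ?thesis by (rule that)
  next
    case False
    then have "t0 = a" using t0 by blast
    have "min b (a + d/2) \<in> {a..b}" "min b (a + d/2) \<noteq> t0" "dist (min b (a + d/2)) t0 < d"
      using \<open>t0 = a\<close> ab d(1) by (auto simp: dist_real_def)
    then show ?thesis by (rule that)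
  qed
  have t1: "t \<in> {0..1}" using t ab by auto
  define p where "p = g e t"
  have ps: "p \<in> s" using so(2) t unfolding p_def by blast
  have "p \<in> S2" using dr_edge[OF dr ab(1)] t1 unfolding p_def path_image_def by blast
  moreover have "dist (g e t) c < \<epsilon>" using d t t1 t0 by auto
  ultimately have "p \<in> Op" using eps unfolding p_def by (auto simp: dist_commute)
  then have p1: "p \<in> k ` ball 0 r" using Op(2) \<open>p \<in> S2\<close> by blast
  have p3: "p \<noteq> c" using inj_onD[OF dr_inj[OF dr ab(1)] _ t1 t01] t(2) t0(2) unfolding p_def by auto
  have p2: "p \<in> path_image (g e1) \<union> path_image (g f1)"
    using ee t1 unfolding p_def path_image_def by blast
  have sub: "{F \<in> cells V E g. s \<subseteq> closure F} \<subseteq> {F \<in> cells V E g. p \<in> closure F}" using ps by blast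
  have C: "finite {F \<in> cells V E g. p \<in> closure F}" "card {F \<in> cells V E g. p \<in> closure F} \<le> 2"
    using loc_card[OF L p1 p2 p3] by auto
  have "finite {F \<in> cells V E g. s \<subseteq> closure F}" using finite_subset[OF sub C(1)] .
  moreover have "card {F \<in> cells V E g. s \<subseteq> closure F} \<le> 2" using card_mono[OF C(1) sub] C(2) by linarith
  ultimately show ?thesis by blast
qed

end


definition OS :: "(real^3) set \<Rightarrow> 'e set \<Rightarrow> ('e \<Rightarrow> real \<Rightarrow> real^3) \<Rightarrow> (real^3) set set" where
  "OS V E g = {s. \<exists>x\<in>V. \<exists>c\<in>crossing_pts V E g. seg_between V E g s x c}"

lemma cr_notV: "c \<in> crossing_pts V E g \<Longrightarrow> c \<notin> V"
  unfolding crossing_pts_def by blast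

lemma cr_pn: "crossing_pts V E g \<subseteq> pnodes V E g" "V \<subseteq> pnodes V E g"
  unfolding pnodes_def by auto

lemma seg_pnodes:
  assumes "seg_of V E g e a b"
  shows "g e ` {a..b} \<inter> pnodes V E g = {g e a, g e b}"
proof
  show "g e ` {a..b} \<inter> pnodes V E g \<subseteq> {g e a, g e b}"
  proof
    fix y assume "y \<in> g e ` {a..b} \<inter> pnodes V E g"
    then obtain t where t: "t \<in> {a..b}" "y = g e t" "y \<in> pnodes V E g" by blast
    have "\<not> (a < t \<and> t < b)" using assms t unfolding seg_of_def by blast
    then have "t = a \<or> t = b" using t(1) by auto
    then show "y \<in> {g e a, g e b}" using t(2) by auto
  qed
  show "{g e a, g e b} \<subseteq> g e ` {a..b} \<inter> pnodes V E g"
    using assms unfolding seg_of_def by auto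
qed

lemma segb_pnodes:
  assumes "seg_between V E g s x y"
  shows "s \<inter> pnodes V E g = {x, y}"
proof -
  obtain e a b where "seg_of V E g e a b" "s = g e ` {a..b}" "{x, y} = {g e a, g e b}"
    using assms unfolding seg_between_def by blast
  then show ?thesis using seg_pnodes by metis
qed

lemma segb_sym: "seg_between V E g s x y \<Longrightarrow> seg_between V E g s y x"
  unfolding seg_between_def by (simp add: insert_commute)

lemma seg_unique1:
  assumes "seg_of V E g e a b" "seg_of V E g e a b'" shows "b = b'"
proof (rule ccontr)
  assume "b \<noteq> b'"
  then have "b < b' \<or> b' < b" by linarith
  then show False
  proof
    assume "b < b'"
    then show False using assms unfolding seg_of_def by auto
  next
    assume "b' < b"
    then show False using assms unfolding seg_of_def by auto
  qed
qed

lemma seg_unique2: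
  assumes "seg_of V E g e a b" "seg_of V E g e a' b" shows "a = a'"
proof (rule ccontr)
  assume "a \<noteq> a'"
  then have "a < a' \<or> a' < a" by linarith
  then show False
  proof
    assume "a < a'"
    then show False using assms unfolding seg_of_def by auto
  next
    assume "a' < a"
    then show False using assms unfolding seg_of_def by auto
  qed
qed

context
  fixes V :: "(real^3) set" and E :: "'e set" and g :: "'e \<Rightarrow> real \<Rightarrow> real^3"
  assumes dr: "drawing V E g"
begin

lemma unc_pnodes:
  assumes "uncrossed_edge_between V E g s u v"
  shows "s \<inter> pnodes V E g = {u, v}"
proof -
  obtain e where e: "e \<in> E" "num_cr V E g e = 0" "s = path_image (g e)" "{u, v} = ends (g e)"
    using assms unfolding uncrossed_edge_between_def by blast
  have "path_image (g e) \<inter> crossing_pts V E g = {}"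
    using e(2) finite_cr_on[OF dr e(1)] unfolding num_cr_def by simp
  moreover have "path_image (g e) \<inter> V = ends (g e)" using dr_edge[OF dr e(1)] by blast
  ultimately show ?thesis using e unfolding pnodes_def by blast
qed

lemma OS_card:
  assumes tp: "three_plane V E g"
  shows "finite (OS V E g) \<and> card (OS V E g) \<le> 2 * card (crossed_edges V E g)"
proof -
  let ?CE = "crossed_edges V E g"
  have ex: "\<exists>w. seg_of V E g (fst w) (fst (snd w)) (snd (snd w)) \<and> s = g (fst w) ` {fst (snd w)..snd (snd w)}
      \<and> (fst (snd w) = 0 \<or> snd (snd w) = 1) \<and> fst w \<in> ?CE" if sOS: "s \<in> OS V E g" for s
  proof -
    obtain x c where xc: "x \<in> V" "c \<in> crossing_pts V E g" "seg_between V E g s x c"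
      using sOS unfolding OS_def by blast
    obtain e a b where so: "seg_of V E g e a b" "s = g e ` {a..b}" "{x, c} = {g e a, g e b}"
      using xc(3) unfolding seg_between_def by blast
    have ab: "e \<in> E" "0 \<le> a" "a < b" "b \<le> 1" using so(1) unfolding seg_of_def by auto
    have "x \<in> {x, c}" "c \<in> {x,c}" by simp_all
    then have xin: "x \<in> {g e a, g e b}" and cin: "c \<in> {g e a, g e b}" by (simp_all only: so(3))
    have "a = 0 \<or> b = 1"
    proof (cases "x = g e a")
      case True
      then have "a = 0 \<or> a = 1" using dr_V_param[OF dr ab(1), of a] xc(1) ab by auto
      then show ?thesis using ab by auto
    next
      case False
      then have "x = g e b" using xin by simp
      then have "b = 0 \<or> b = 1" using dr_V_param[OF dr ab(1), of b] xc(1) ab by auto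
      then show ?thesis using ab by auto
    qed
    moreover have "e \<in> ?CE"
    proof -
      have "c \<in> path_image (g e)" using cin ab unfolding path_image_def by auto
      then have "path_image (g e) \<inter> crossing_pts V E g \<noteq> {}" using xc(2) by blast
      then have "num_cr V E g e \<noteq> 0" using finite_cr_on[OF dr ab(1)] unfolding num_cr_def by simp
      moreover have "num_cr V E g e \<le> 3" using tp ab(1) unfolding three_plane_def by blast
      ultimately have "num_cr V E g e = 1 \<or> num_cr V E g e = 2 \<or> num_cr V E g e = 3" by linarith
      then show ?thesis using ab(1) unfolding crossed_edges_def edges_with_cr_def by blast
    qed
    ultimately show ?thesis using so by (intro exI[of _ "(e, a, b)"]) auto
  qed
  define W where "W s = (SOME w. seg_of V E g (fst w) (fst (snd w)) (snd (snd w)) \<and> s = g (fst w) ` {fst (snd w)..snd (snd w)}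
      \<and> (fst (snd w) = 0 \<or> snd (snd w) = 1) \<and> fst w \<in> ?CE)" for s
  have Wp: "seg_of V E g (fst (W s)) (fst (snd (W s))) (snd (snd (W s))) \<and> s = g (fst (W s)) ` {fst (snd (W s))..snd (snd (W s))}
      \<and> (fst (snd (W s)) = 0 \<or> snd (snd (W s)) = 1) \<and> fst (W s) \<in> ?CE" if "s \<in> OS V E g" for s
    unfolding W_def using someI_ex[OF ex[OF that]] .
  define \<phi> where "\<phi> s = (fst (W s), fst (snd (W s)) = 0)" for s
  have inj: "inj_on \<phi> (OS V E g)"
  proof (rule inj_onI)
    fix s s' assume ss: "s \<in> OS V E g" "s' \<in> OS V E g" "\<phi> s = \<phi> s'"
    obtain e a b where w: "W s = (e, a, b)" by (metis prod.collapse)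
    obtain e' a' b' where w': "W s' = (e', a', b')" by (metis prod.collapse)
    have P: "seg_of V E g e a b" "s = g e ` {a..b}" "a = 0 \<or> b = 1" using Wp[OF ss(1)] w by auto
    have P': "seg_of V E g e' a' b'" "s' = g e' ` {a'..b'}" "a' = 0 \<or> b' = 1" using Wp[OF ss(2)] w' by auto
    have eq: "e = e'" "(a = 0) = (a' = 0)" using ss(3) w w' unfolding \<phi>_def by auto
    show "s = s'"
    proof (cases "a = 0")
      case True
      then have "a' = 0" using eq by simp
      then have "b = b'" using seg_unique1[of V E g e a b b'] P(1) P'(1) eq True by simp
      then show ?thesis using P P' eq True \<open>a' = 0\<close> by simp
    next
      case False
      then have "a' \<noteq> 0" "b = 1" "b' = 1" using eq P(3) P'(3) by auto
      then have "a = a'" using seg_unique2[of V E g e a b a'] P(1) P'(1) eq by simp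
      then show ?thesis using P P' eq \<open>b = 1\<close> \<open>b' = 1\<close> by simp
    qed
  qed
  have img: "\<phi> ` OS V E g \<subseteq> ?CE \<times> UNIV" using Wp unfolding \<phi>_def by auto
  have fCE: "finite ?CE" using finite_E[OF dr] unfolding crossed_edges_def edges_with_cr_def by auto
  then have fin: "finite (?CE \<times> (UNIV :: bool set))" by simp
  have "finite (OS V E g)" using inj_on_finite[OF inj img fin] .
  moreover have "card (OS V E g) \<le> card (?CE \<times> (UNIV :: bool set))" using card_inj_on_le[OF inj img fin] .
  then have "card (OS V E g) \<le> 2 * card ?CE" by (simp add: card_cartesian_product)
  ultimately show ?thesis by blast
qed

end


context
  fixes V :: "(real^3) set" and E :: "'e set" and g :: "'e \<Rightarrow> real \<Rightarrow> real^3"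
  assumes dr: "drawing V E g"
begin

lemma B4_info:
  assumes "is_B4 V E g F"
  shows "card (cell_bd F \<inter> V) = 1 \<and> card (cell_bd F \<inter> crossing_pts V E g) = 2 \<and>
    (\<exists>s1 s2. s1 \<in> OS V E g \<and> s2 \<in> OS V E g \<and> s1 \<noteq> s2 \<and> s1 \<subseteq> cell_bd F \<and> s2 \<subseteq> cell_bd F)"
proof -
  obtain v c1 c2 s1 s2 s3 where B: "v \<in> V" "c1 \<in> crossing_pts V E g" "c2 \<in> crossing_pts V E g"
        "c1 \<noteq> c2"
        "seg_between V E g s1 v c1" "seg_between V E g s2 c1 c2" "seg_between V E g s3 c2 v"
        "cell_bd F = s1 \<union> s2 \<union> s3"
    using assms unfolding is_B4_def by blast
  have nv: "c1 \<notin> V" "c2 \<notin> V" "v \<notin> crossing_pts V E g" using B cr_notV by blast+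
  have P: "cell_bd F \<inter> pnodes V E g = {v, c1, c2}"
    using B(8) segb_pnodes[OF B(5)] segb_pnodes[OF B(6)] segb_pnodes[OF B(7)] by auto
  have "cell_bd F \<inter> V = {v}" using P cr_pn(2)[of V E g] nv B(1) by auto
  moreover have "cell_bd F \<inter> crossing_pts V E g = {c1, c2}" using P cr_pn(1)[of V E g] nv B(2,3) by auto
  moreover have "s1 \<noteq> s3"
  proof
    assume "s1 = s3"
    then have "{v, c1} = {c2, v}" using segb_pnodes[OF B(5)] segb_pnodes[OF B(7)] by simp
    then have "c1 \<in> {c2, v}" by (metis insertI1 insertI2)
    then show False using B(1,4) nv by auto
  qed
  moreover have "s1 \<in> OS V E g" "s3 \<in> OS V E g" using B segb_sym[OF B(7)] unfolding OS_def by blast+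
  ultimately show ?thesis using B(4,8) by (intro conjI exI[of _ s1] exI[of _ s3]) auto
qed

lemma B5_info:
  assumes "is_B5 V E g F"
  shows "card (cell_bd F \<inter> V) = 1 \<and> card (cell_bd F \<inter> crossing_pts V E g) = 3 \<and>
    (\<exists>s1 s2. s1 \<in> OS V E g \<and> s2 \<in> OS V E g \<and> s1 \<noteq> s2 \<and> s1 \<subseteq> cell_bd F \<and> s2 \<subseteq> cell_bd F)"
proof -
  obtain v c1 c2 c3 s1 s2 s3 s4 where B: "v \<in> V" "c1 \<in> crossing_pts V E g"
        "c2 \<in> crossing_pts V E g" "c3 \<in> crossing_pts V E g"
        "c1 \<noteq> c2" "c1 \<noteq> c3" "c2 \<noteq> c3"
        "seg_between V E g s1 v c1" "seg_between V E g s2 c1 c2"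
        "seg_between V E g s3 c2 c3" "seg_between V E g s4 c3 v"
        "cell_bd F = s1 \<union> s2 \<union> s3 \<union> s4"
    using assms unfolding is_B5_def by blast
  have nv: "c1 \<notin> V" "c2 \<notin> V" "c3 \<notin> V" "v \<notin> crossing_pts V E g" using B cr_notV by blast+
  have P: "cell_bd F \<inter> pnodes V E g = {v, c1, c2, c3}"
    using B(12) segb_pnodes[OF B(8)] segb_pnodes[OF B(9)] segb_pnodes[OF B(10)] segb_pnodes[OF B(11)] by auto
  have "cell_bd F \<inter> V = {v}" using P cr_pn(2)[of V E g] nv B(1) by auto
  moreover have "cell_bd F \<inter> crossing_pts V E g = {c1, c2, c3}" using P cr_pn(1)[of V E g] nv B(2,3,4) by auto
  moreover have "s1 \<noteq> s4"
  proof
    assume "s1 = s4"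
    then have "{v, c1} = {c3, v}" using segb_pnodes[OF B(8)] segb_pnodes[OF B(11)] by simp
    then have "c1 \<in> {c3, v}" by (metis insertI1 insertI2)
    then show False using B(1,6) nv by auto
  qed
  moreover have "s1 \<in> OS V E g" "s4 \<in> OS V E g" using B segb_sym[OF B(11)] unfolding OS_def by blast+
  ultimately show ?thesis using B(5,6,7,12) by (intro conjI exI[of _ s1] exI[of _ s4]) auto
qed

lemma U5_info:
  assumes "is_U5 V E g F"
  shows "card (cell_bd F \<inter> V) = 2 \<and> card (cell_bd F \<inter> crossing_pts V E g) = 1 \<and>
    (\<exists>s1 s2. s1 \<in> OS V E g \<and> s2 \<in> OS V E g \<and> s1 \<noteq> s2 \<and> s1 \<subseteq> cell_bd F \<and> s2 \<subseteq> cell_bd F)"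
proof -
  obtain u v c s0 s1 s2 where B: "u \<in> V" "v \<in> V" "u \<noteq> v" "c \<in> crossing_pts V E g"
        "uncrossed_edge_between V E g s0 u v"
        "seg_between V E g s1 v c" "seg_between V E g s2 c u"
        "cell_bd F = s0 \<union> s1 \<union> s2"
    using assms unfolding is_U5_def by blast
  have nv: "c \<notin> V" "u \<notin> crossing_pts V E g" "v \<notin> crossing_pts V E g" using B cr_notV by blast+
  have P: "cell_bd F \<inter> pnodes V E g = {u, v, c}"
    using B(8) unc_pnodes[OF dr B(5)] segb_pnodes[OF B(6)] segb_pnodes[OF B(7)] by auto
  have "cell_bd F \<inter> V = {u, v}" using P cr_pn(2)[of V E g] nv B(1,2) by auto
  moreover have "cell_bd F \<inter> crossing_pts V E g = {c}" using P cr_pn(1)[of V E g] nv B(4) by auto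
  moreover have "s1 \<noteq> s2"
  proof
    assume "s1 = s2"
    then have "{v, c} = {c, u}" using segb_pnodes[OF B(6)] segb_pnodes[OF B(7)] by simp
    then have "v \<in> {c, u}" by (metis insertI1)
    then show False using B(3) nv B(2) by auto
  qed
  moreover have "s1 \<in> OS V E g" "s2 \<in> OS V E g" using B segb_sym[OF B(7)] unfolding OS_def by blast+
  ultimately show ?thesis using B(3,8) by (intro conjI exI[of _ s1] exI[of _ s2]) auto
qed

lemma U6_info:
  assumes "is_U6 V E g F"
  shows "card (cell_bd F \<inter> V) = 2 \<and> card (cell_bd F \<inter> crossing_pts V E g) = 2 \<and>
    (\<exists>s1 s2. s1 \<in> OS V E g \<and> s2 \<in> OS V E g \<and> s1 \<noteq> s2 \<and> s1 \<subseteq> cell_bd F \<and> s2 \<subseteq> cell_bd F)"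
proof -
  obtain u v c1 c2 s0 s1 s2 s3 where B: "u \<in> V" "v \<in> V" "u \<noteq> v"
        "c1 \<in> crossing_pts V E g" "c2 \<in> crossing_pts V E g" "c1 \<noteq> c2"
        "uncrossed_edge_between V E g s0 u v"
        "seg_between V E g s1 v c1" "seg_between V E g s2 c1 c2" "seg_between V E g s3 c2 u"
        "cell_bd F = s0 \<union> s1 \<union> s2 \<union> s3"
    using assms unfolding is_U6_def by blast
  have nv: "c1 \<notin> V" "c2 \<notin> V" "u \<notin> crossing_pts V E g" "v \<notin> crossing_pts V E g" using B cr_notV by blast+
  have P: "cell_bd F \<inter> pnodes V E g = {u, v, c1, c2}"
    using B(11) unc_pnodes[OF dr B(7)] segb_pnodes[OF B(8)] segb_pnodes[OF B(9)] segb_pnodes[OF B(10)] by auto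
  have "cell_bd F \<inter> V = {u, v}" using P cr_pn(2)[of V E g] nv B(1,2) by auto
  moreover have "cell_bd F \<inter> crossing_pts V E g = {c1, c2}" using P cr_pn(1)[of V E g] nv B(4,5) by auto
  moreover have "s1 \<noteq> s3"
  proof
    assume "s1 = s3"
    then have "{v, c1} = {c2, u}" using segb_pnodes[OF B(8)] segb_pnodes[OF B(10)] by simp
    then have "v \<in> {c2, u}" by (metis insertI1)
    then show False using B(3) nv B(2) by auto
  qed
  moreover have "s1 \<in> OS V E g" "s3 \<in> OS V E g" using B segb_sym[OF B(10)] unfolding OS_def by blast+
  ultimately show ?thesis using B(3,6,11) by (intro conjI exI[of _ s1] exI[of _ s3]) auto
qed

end


theorem mainTheorem5:
  fixes V :: "(real^3) set" and E :: "'e set" and g :: "'e \<Rightarrow> real \<Rightarrow> real^3"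
  assumes "drawing V E g" and "three_plane V E g" and "connected_drawing V E g"
  shows "2 * num_cells V E g is_B4 + 2 * num_cells V E g is_B5
           + 2 * num_cells V E g is_U5 + 2 * num_cells V E g is_U6
         \<le> 4 * card (crossed_edges V E g)"
proof -
  note dr = assms(1)
  define T4 where "T4 = {F \<in> cells V E g. is_B4 V E g F}"
  define T5 where "T5 = {F \<in> cells V E g. is_B5 V E g F}"
  define T6 where "T6 = {F \<in> cells V E g. is_U5 V E g F}"
  define T7 where "T7 = {F \<in> cells V E g. is_U6 V E g F}"
  define TC where "TC = T4 \<union> T5 \<union> T6 \<union> T7"
  define Os where "Os = OS V E g"
  have Ocard: "finite Os" "card Os \<le> 2 * card (crossed_edges V E g)"
    using OS_card[OF dr assms(2)] unfolding Os_def by auto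
  have two: "\<exists>s1 s2. s1 \<in> Os \<and> s2 \<in> Os \<and> s1 \<noteq> s2 \<and> s1 \<subseteq> cell_bd F \<and> s2 \<subseteq> cell_bd F"
    if "F \<in> TC" for F
  proof -
    have "is_B4 V E g F \<or> is_B5 V E g F \<or> is_U5 V E g F \<or> is_U6 V E g F"
      using that unfolding TC_def T4_def T5_def T6_def T7_def by blast
    then show ?thesis
    proof (elim disjE)
      assume h: "is_B4 V E g F" show ?thesis using B4_info[OF dr h, THEN conjunct2, THEN conjunct2] unfolding Os_def .
    next
      assume h: "is_B5 V E g F" show ?thesis using B5_info[OF dr h, THEN conjunct2, THEN conjunct2] unfolding Os_def .
    next
      assume h: "is_U5 V E g F" show ?thesis using U5_info[OF dr h, THEN conjunct2, THEN conjunct2] unfolding Os_def .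
    next
      assume h: "is_U6 V E g F" show ?thesis using U6_info[OF dr h, THEN conjunct2, THEN conjunct2] unfolding Os_def .
    qed
  qed
  have segc: "finite {F \<in> cells V E g. s \<subseteq> closure F} \<and> card {F \<in> cells V E g. s \<subseteq> closure F} \<le> 2"
    if sO: "s \<in> Os" for s
  proof -
    obtain x c where "x \<in> V" "c \<in> crossing_pts V E g" "seg_between V E g s x c"
      using sO unfolding Os_def OS_def by blast
    then show ?thesis using seg_card[OF dr] by blast
  qed
  have bdcl: "cell_bd F \<subseteq> closure F" for F :: "(real^3) set" unfolding cell_bd_def by blast
  have TCc: "TC \<subseteq> cells V E g" unfolding TC_def T4_def T5_def T6_def T7_def by blast
  have "TC \<subseteq> (\<Union>s\<in>Os. {F \<in> cells V E g. s \<subseteq> closure F})"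
  proof
    fix F assume F: "F \<in> TC"
    then obtain s where "s \<in> Os" "s \<subseteq> cell_bd F" using two by blast
    then show "F \<in> (\<Union>s\<in>Os. {F \<in> cells V E g. s \<subseteq> closure F})" using F TCc bdcl by blast
  qed
  moreover have "finite (\<Union>s\<in>Os. {F \<in> cells V E g. s \<subseteq> closure F})"
    using Ocard(1) segc by (intro finite_UN_I) auto
  ultimately have fTC: "finite TC" by (rule finite_subset)
  have f: "finite T4" "finite T5" "finite T6" "finite T7"
    using fTC unfolding TC_def by auto
  define nV where "nV F = card (cell_bd F \<inter> V)" for F
  define nC where "nC F = card (cell_bd F \<inter> crossing_pts V E g)" for F
  have i4: "nV F = 1" "nC F = 2" if "F \<in> T4" for F
    using that B4_info[OF dr, of F] unfolding T4_def nV_def nC_def by auto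
  have i5: "nV F = 1" "nC F = 3" if "F \<in> T5" for F
    using that B5_info[OF dr, of F] unfolding T5_def nV_def nC_def by auto
  have i6: "nV F = 2" "nC F = 1" if "F \<in> T6" for F
    using that U5_info[OF dr, of F] unfolding T6_def nV_def nC_def by auto
  have i7: "nV F = 2" "nC F = 2" if "F \<in> T7" for F
    using that U6_info[OF dr, of F] unfolding T7_def nV_def nC_def by auto
  have d: "T4 \<inter> T5 = {}" "T4 \<inter> T6 = {}" "T4 \<inter> T7 = {}" "T5 \<inter> T6 = {}" "T5 \<inter> T7 = {}" "T6 \<inter> T7 = {}"
    using i4 i5 i6 i7 by (fastforce+)
  have cardTC: "card TC = card T4 + card T5 + card T6 + card T7"
  proof -
    have "card (T4 \<union> T5) = card T4 + card T5" using f d by (simp add: card_Un_disjoint)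
    moreover have "card (T4 \<union> T5 \<union> T6) = card (T4 \<union> T5) + card T6"
      using f d by (intro card_Un_disjoint) auto
    moreover have "card (T4 \<union> T5 \<union> T6 \<union> T7) = card (T4 \<union> T5 \<union> T6) + card T7"
      using f d by (intro card_Un_disjoint) auto
    ultimately show ?thesis unfolding TC_def by simp
  qed
  have "2 * card TC = (\<Sum>F\<in>TC. 2)" by simp
  also have "\<dots> \<le> (\<Sum>F\<in>TC. card {s \<in> Os. s \<subseteq> cell_bd F})"
  proof (rule sum_mono)
    fix F assume F: "F \<in> TC"
    obtain s1 s2 where s: "s1 \<in> Os" "s2 \<in> Os" "s1 \<noteq> s2" "s1 \<subseteq> cell_bd F" "s2 \<subseteq> cell_bd F"
      using two[OF F] by (elim exE conjE)
    have sub: "{s1, s2} \<subseteq> {s \<in> Os. s \<subseteq> cell_bd F}" using s(1,2,4,5) by simp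
    have fin: "finite {s \<in> Os. s \<subseteq> cell_bd F}" using Ocard(1) by simp
    have "card {s1, s2} \<le> card {s \<in> Os. s \<subseteq> cell_bd F}" using card_mono[OF fin sub] .
    moreover have "card {s1, s2} = 2" using s(3) by simp
    ultimately show "2 \<le> card {s \<in> Os. s \<subseteq> cell_bd F}" by simp
  qed
  also have "\<dots> = (\<Sum>F\<in>TC. \<Sum>s\<in>{s. s \<in> Os \<and> s \<subseteq> cell_bd F}. (1::nat))" by simp
  also have "\<dots> = (\<Sum>s\<in>Os. \<Sum>F\<in>{F. F \<in> TC \<and> s \<subseteq> cell_bd F}. (1::nat))"
    by (rule sum.swap_restrict[OF fTC Ocard(1)])
  also have "\<dots> = (\<Sum>s\<in>Os. card {F \<in> TC. s \<subseteq> cell_bd F})" by simp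
  also have "\<dots> \<le> (\<Sum>s\<in>Os. 2)"
  proof (rule sum_mono)
    fix s assume s: "s \<in> Os"
    have "{F \<in> TC. s \<subseteq> cell_bd F} \<subseteq> {F \<in> cells V E g. s \<subseteq> closure F}" using TCc bdcl by blast
    then have "card {F \<in> TC. s \<subseteq> cell_bd F} \<le> card {F \<in> cells V E g. s \<subseteq> closure F}"
      using segc[OF s] by (intro card_mono) auto
    then show "card {F \<in> TC. s \<subseteq> cell_bd F} \<le> 2" using segc[OF s] by linarith
  qed
  also have "\<dots> = 2 * card Os" by simp
  finally have "2 * card TC \<le> 2 * card Os" .
  then have "2 * card TC \<le> 4 * card (crossed_edges V E g)" using Ocard(2) by linarith
  then show ?thesis using cardTC unfolding num_cells_def T4_def[symmetric] T5_def[symmetric] T6_def[symmetric] T7_def[symmetric] by simp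
qed

end
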